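(* Let $G$ be a bipartite graph with ordered colour classes $A,B$ whose edge set is partitioned into $k$ monotone matchings $E_1,\dots,E_k$. Let $G'$ be the unraveling of $G$ with respect to this partition. Then $G'$ is $3$-monotone.
   Context: For a bipartite graph with ordered colour classes $(v_1,\dots,v_n)$ and $(w_1,\dots,w_m)$, edges $v_iw_j$ and $v_kw_\ell$ cross if $i<k$ and $\ell<j$; a matching is monotone if no two of its edges cross; a bipartite graph is $d$-monotone if, for some ordering of its colour classes, its edge set is the union of $d$ monotone matchings. Given a graph $G$ with a partition $E_1,\dots,E_k$ of $E(G)$, the unraveling $G'$ has vertex set $V(G)\times[1,k]=\{v_i: v\in V(G), i\in[1,k]\}$, with an edge $v_iw_i$ for each edge $vw\in E_i$ and each $i\in[1,k]$, and an edge $v_iv_{i+1}$ for each $v\in V(G)$ and $i\in[1,k-1]$. *)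

theory Defs
  imports Main
begin

(* An ordered bipartite graph: colour classes X, Y (disjoint), each linearly
   ordered via an injective rank function into nat; edges are 2-sets {x,y}
   with x in X, y in Y. *)

definition crosses ::
  "'v set \<Rightarrow> 'v set \<Rightarrow> ('v \<Rightarrow> nat) \<Rightarrow> ('v \<Rightarrow> nat) \<Rightarrow> 'v set \<Rightarrow> 'v set \<Rightarrow> bool" where
  "crosses X Y oX oY e f \<longleftrightarrow>
     (\<exists>x y x' y'. x \<in> X \<and> y \<in> Y \<and> x' \<in> X \<and> y' \<in> Y \<and>
        e = {x, y} \<and> f = {x', y'} \<and> oX x < oX x' \<and> oY y' < oY y)"

definition is_matching :: "'v set set \<Rightarrow> bool" where
  "is_matching M \<longleftrightarrow> (\<forall>e\<in>M. \<forall>f\<in>M. e \<noteq> f \<longrightarrow> e \<inter> f = {})"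

definition monotone_matching ::
  "'v set \<Rightarrow> 'v set \<Rightarrow> ('v \<Rightarrow> nat) \<Rightarrow> ('v \<Rightarrow> nat) \<Rightarrow> 'v set set \<Rightarrow> bool" where
  "monotone_matching X Y oX oY M \<longleftrightarrow>
     is_matching M \<and> (\<forall>e\<in>M. \<forall>f\<in>M. \<not> crosses X Y oX oY e f)"

definition d_monotone :: "'v set \<Rightarrow> 'v set set \<Rightarrow> nat \<Rightarrow> bool" where
  "d_monotone V E d \<longleftrightarrow>
     (\<exists>X Y (oX :: 'v \<Rightarrow> nat) (oY :: 'v \<Rightarrow> nat) (Ms :: nat \<Rightarrow> 'v set set).
        X \<inter> Y = {} \<and> X \<union> Y = V \<and> inj_on oX X \<and> inj_on oY Y \<and>
        (\<forall>e\<in>E. \<exists>x\<in>X. \<exists>y\<in>Y. e = {x, y}) \<and>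
        E = (\<Union>i<d. Ms i) \<and>
        (\<forall>i<d. monotone_matching X Y oX oY (Ms i)))"

definition unravel_V :: "'v set \<Rightarrow> nat \<Rightarrow> ('v \<times> nat) set" where
  "unravel_V V k = V \<times> {1..k}"

definition unravel_E :: "'v set \<Rightarrow> (nat \<Rightarrow> 'v set set) \<Rightarrow> nat \<Rightarrow> ('v \<times> nat) set set" where
  "unravel_E V P k =
     {{(v, i), (w, i)} | v w i. i \<in> {1..k} \<and> {v, w} \<in> P i}
     \<union> {{(v, i), (v, Suc i)} | v i. v \<in> V \<and> 1 \<le> i \<and> i < k}"

end

theory Submission
  imports Defs
begin

lemma lex_lt:
  fixes r1 r2 M i j :: nat
  assumes "r1 < M" "r2 < M" "i*M + r1 < j*M + r2"
  shows "i < j \<or> (i = j \<and> r1 < r2)"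
proof (rule ccontr)
  assume "\<not> ?thesis"
  hence "j < i \<or> (i = j \<and> r2 \<le> r1)" by auto
  thus False
  proof
    assume "j < i"
    hence "Suc j * M \<le> i * M" by (meson Suc_leI mult_le_mono1)
    thus False using assms by auto
  next
    assume "i = j \<and> r2 \<le> r1" thus False using assms by auto
  qed
qed

lemma lex_eq:
  fixes r1 r2 M i j :: nat
  assumes "r1 < M" "r2 < M" "i*M + r1 = j*M + r2"
  shows "i = j \<and> r1 = r2"
proof -
  have "(i*M + r1) div M = i" using assms(1) by simp
  moreover have "(j*M + r2) div M = j" using assms(2) by simp
  ultimately have "i = j" using assms(3) by simp
  thus ?thesis using assms(3) by simp
qed

theorem lemma8:
  fixes A B :: "'v set" and oA oB :: "'v \<Rightarrow> nat"
    and E :: "'v set set" and P :: "nat \<Rightarrow> 'v set set" and k :: nat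
  assumes "finite A" and "finite B" and "A \<inter> B = {}"
    and "inj_on oA A" and "inj_on oB B"
    and "\<forall>e\<in>E. \<exists>a\<in>A. \<exists>b\<in>B. e = {a, b}"
    and "E = (\<Union>i\<in>{1..k}. P i)"
    and "\<forall>i\<in>{1..k}. \<forall>j\<in>{1..k}. i \<noteq> j \<longrightarrow> P i \<inter> P j = {}"
    and "\<forall>i\<in>{1..k}. monotone_matching A B oA oB (P i)"
  shows "d_monotone (unravel_V (A \<union> B) k) (unravel_E (A \<union> B) P k) 3"
proof -
  define N where "N = Suc ((\<Sum>a\<in>A. oA a) + (\<Sum>b\<in>B. oB b))"
  have NA: "\<And>a. a \<in> A \<Longrightarrow> oA a < N"
    using member_le_sum[of _ A oA] assms(1) unfolding N_def by fastforce
  have NB: "\<And>b. b \<in> B \<Longrightarrow> oB b < N"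
    using member_le_sum[of _ B oB] assms(2) unfolding N_def by fastforce
  define M where "M = 2 * N"
  define r where "r v = (if v \<in> A then oA v else N + oB v)" for v
  have rM: "\<And>v. v \<in> A \<union> B \<Longrightarrow> r v < M"
  proof -
    fix v assume "v \<in> A \<union> B"
    thus "r v < M" using NA[of v] NB[of v] unfolding r_def M_def by (cases "v \<in> A") auto
  qed
  have rinj: "\<And>v w. v \<in> A \<union> B \<Longrightarrow> w \<in> A \<union> B \<Longrightarrow> r v = r w \<Longrightarrow> v = w"
  proof -
    fix v w assume vw: "v \<in> A \<union> B" "w \<in> A \<union> B" "r v = r w"
    show "v = w"
    proof (cases "v \<in> A"; cases "w \<in> A")
      assume "v \<in> A" "w \<in> A" thus ?thesis using vw assms(4) unfolding r_def inj_on_def by auto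
    next
      assume "v \<in> A" "w \<notin> A" thus ?thesis using vw NA[of v] unfolding r_def by auto
    next
      assume "v \<notin> A" "w \<in> A" thus ?thesis using vw NA[of w] unfolding r_def by auto
    next
      assume "v \<notin> A" "w \<notin> A" thus ?thesis using vw assms(5) unfolding r_def inj_on_def by auto
    qed
  qed
  define ord :: "'v \<times> nat \<Rightarrow> nat" where "ord = (\<lambda>(v,i). i * M + r v)"
  define X where "X = {(v,i). v \<in> A \<union> B \<and> i \<in> {1..k} \<and> (v \<in> A \<longleftrightarrow> odd i)}"
  define Y where "Y = {(v,i). v \<in> A \<union> B \<and> i \<in> {1..k} \<and> (v \<in> A \<longleftrightarrow> even i)}"
  define Ms :: "nat \<Rightarrow> ('v \<times> nat) set set" where
    "Ms n = (if n = 0 then {{(a,i),(b,i)} | a b i. i \<in> {1..k} \<and> a \<in> A \<and> b \<in> B \<and> {a,b} \<in> P i}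
             else if n = 1 then {{(v,i),(v,Suc i)} | v i. v \<in> A \<union> B \<and> 1 \<le> i \<and> i < k \<and> (v \<in> A \<longleftrightarrow> odd i)}
             else {{(v,i),(v,Suc i)} | v i. v \<in> A \<union> B \<and> 1 \<le> i \<and> i < k \<and> (v \<in> A \<longleftrightarrow> even i)})" for n
  have XY: "X \<inter> Y = {}" unfolding X_def Y_def by auto
  have XYV: "X \<union> Y = unravel_V (A \<union> B) k" unfolding X_def Y_def unravel_V_def by auto
  have ordlt: "\<And>v i w j. v \<in> A \<union> B \<Longrightarrow> w \<in> A \<union> B \<Longrightarrow> ord (v,i) < ord (w,j) \<Longrightarrow>
        i < j \<or> (i = j \<and> r v < r w)"
    unfolding ord_def using lex_lt[OF rM rM] by auto
  have injV: "\<And>v i w j. v \<in> A \<union> B \<Longrightarrow> w \<in> A \<union> B \<Longrightarrow> ord (v,i) = ord (w,j) \<Longrightarrow> (v,i) = (w,j)"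
  proof -
    fix v i w j assume h: "v \<in> A \<union> B" "w \<in> A \<union> B" "ord (v,i) = ord (w,j)"
    hence "i = j \<and> r v = r w" using lex_eq[OF rM[OF h(1)] rM[OF h(2)]] unfolding ord_def by auto
    thus "(v,i) = (w,j)" using rinj h by auto
  qed
  have injX: "inj_on ord X" unfolding inj_on_def X_def using injV by auto
  have injY: "inj_on ord Y" unfolding inj_on_def Y_def using injV by auto
  have PE: "\<And>i v w. i \<in> {1..k} \<Longrightarrow> {v,w} \<in> P i \<Longrightarrow> \<exists>a\<in>A. \<exists>b\<in>B. {v,w} = {a,b}"
    using assms(6,7) by blast
  have Ms0: "Ms 0 = {{(a,i),(b,i)} | a b i. i \<in> {1..k} \<and> a \<in> A \<and> b \<in> B \<and> {a,b} \<in> P i}"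
    and Ms1: "Ms 1 = {{(v,i),(v,Suc i)} | v i. v \<in> A \<union> B \<and> 1 \<le> i \<and> i < k \<and> (v \<in> A \<longleftrightarrow> odd i)}"
    and Ms2: "Ms 2 = {{(v,i),(v,Suc i)} | v i. v \<in> A \<union> B \<and> 1 \<le> i \<and> i < k \<and> (v \<in> A \<longleftrightarrow> even i)}"
    unfolding Ms_def by auto
  have Eeq: "unravel_E (A \<union> B) P k = (\<Union>n<3. Ms n)"
  proof
    show "unravel_E (A \<union> B) P k \<subseteq> (\<Union>n<3. Ms n)"
    proof
      fix e assume "e \<in> unravel_E (A \<union> B) P k"
      then consider (l) v w i where "e = {(v,i),(w,i)}" "i \<in> {1..k}" "{v,w} \<in> P i"
        | (s) v i where "e = {(v,i),(v,Suc i)}" "v \<in> A \<union> B" "1 \<le> i" "i < k"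
        unfolding unravel_E_def by blast
      thus "e \<in> (\<Union>n<3. Ms n)"
      proof cases
        case l
        then obtain a b where ab: "a \<in> A" "b \<in> B" "{v,w} = {a,b}" using PE by blast
        hence "e = {(a,i),(b,i)}" using l by (auto simp: doubleton_eq_iff)
        hence "e \<in> Ms 0" unfolding Ms0 using l ab by auto
        thus ?thesis by force
      next
        case s
        show ?thesis
        proof (cases "v \<in> A \<longleftrightarrow> odd i")
          case True
          hence "e \<in> Ms 1" unfolding Ms1 using s by auto
          thus ?thesis by force
        next
          case False
          hence "e \<in> Ms 2" unfolding Ms2 using s by auto
          thus ?thesis by force
        qed
      qed
    qed
  next
    show "(\<Union>n<3. Ms n) \<subseteq> unravel_E (A \<union> B) P k"
    proof
      fix e assume "e \<in> (\<Union>n<3. Ms n)"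
      then obtain n where "n < 3" "e \<in> Ms n" by auto
      hence "e \<in> Ms 0 \<or> e \<in> Ms 1 \<or> e \<in> Ms 2" by (metis One_nat_def less_Suc_eq numeral_3_eq_3 numeral_2_eq_2 less_one)
      thus "e \<in> unravel_E (A \<union> B) P k"
        unfolding Ms0 Ms1 Ms2 unravel_E_def by blast
    qed
  qed
  have edges: "\<forall>e\<in>unravel_E (A \<union> B) P k. \<exists>x\<in>X. \<exists>y\<in>Y. e = {x, y}"
  proof
    fix e assume "e \<in> unravel_E (A \<union> B) P k"
    then obtain n where "n < 3" "e \<in> Ms n" using Eeq by auto
    hence "e \<in> Ms 0 \<or> e \<in> Ms 1 \<or> e \<in> Ms 2" by (metis One_nat_def less_Suc_eq numeral_3_eq_3 numeral_2_eq_2 less_one)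
    thus "\<exists>x\<in>X. \<exists>y\<in>Y. e = {x, y}"
    proof (elim disjE)
      assume "e \<in> Ms 0"
      then obtain a b i where "e = {(a,i),(b,i)}" "i \<in> {1..k}" "a \<in> A" "b \<in> B"
        unfolding Ms0 by blast
      note h = this
      show ?thesis
      proof (cases "odd i")
        case True
        hence "(a,i) \<in> X" "(b,i) \<in> Y" using h assms(3) unfolding X_def Y_def by auto
        thus ?thesis using h by blast
      next
        case False
        hence "(b,i) \<in> X" "(a,i) \<in> Y" using h assms(3) unfolding X_def Y_def by auto
        thus ?thesis using h by (metis insert_commute)
      qed
    next
      assume "e \<in> Ms 1"
      then obtain v i where "e = {(v,i),(v,Suc i)}" "v \<in> A \<union> B" "1 \<le> i" "i < k" "v \<in> A \<longleftrightarrow> odd i"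
        unfolding Ms1 by blast
      hence "(v,i) \<in> X" "(v,Suc i) \<in> Y" unfolding X_def Y_def by auto
      thus ?thesis using \<open>e = _\<close> by blast
    next
      assume "e \<in> Ms 2"
      then obtain v i where "e = {(v,i),(v,Suc i)}" "v \<in> A \<union> B" "1 \<le> i" "i < k" "v \<in> A \<longleftrightarrow> even i"
        unfolding Ms2 by blast
      hence "(v,Suc i) \<in> X" "(v,i) \<in> Y" unfolding X_def Y_def by auto
      thus ?thesis using \<open>e = _\<close> by (metis insert_commute)
    qed
  qed
  have ends: "\<And>x y x' y'. x \<in> X \<Longrightarrow> y \<in> Y \<Longrightarrow> x' \<in> X \<Longrightarrow> y' \<in> Y \<Longrightarrow> {x,y} = {x',y'} \<Longrightarrow> x = x' \<and> y = y'"
    using XY by (auto simp: doubleton_eq_iff)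
  have rA: "\<And>a. a \<in> A \<Longrightarrow> r a = oA a" unfolding r_def by auto
  have rB: "\<And>b. b \<in> B \<Longrightarrow> r b = N + oB b" unfolding r_def using assms(3) by auto
  have m0: "monotone_matching X Y ord ord (Ms 0)"
  proof -
    have h0: "\<exists>a b i. {a,b} \<in> P i \<and> i \<in> {1..k} \<and> a \<in> A \<and> b \<in> B \<and>
               ((odd i \<and> x = (a,i) \<and> y = (b,i)) \<or> (even i \<and> x = (b,i) \<and> y = (a,i)))"
      if prem: "e \<in> Ms 0" "e = {x,y}" "x \<in> X" "y \<in> Y" for e x y
    proof -
      obtain a b i where ab: "e = {(a,i),(b,i)}" "i \<in> {1..k}" "a \<in> A" "b \<in> B" "{a,b} \<in> P i"
        using prem(1) unfolding Ms0 by blast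
      show ?thesis
      proof (cases "odd i")
        case True
        hence "(a,i) \<in> X" "(b,i) \<in> Y" using ab assms(3) unfolding X_def Y_def by auto
        hence "x = (a,i) \<and> y = (b,i)" using ends prem ab by metis
        thus ?thesis using ab True by blast
      next
        case False
        hence "(b,i) \<in> X" "(a,i) \<in> Y" using ab assms(3) unfolding X_def Y_def by auto
        hence "x = (b,i) \<and> y = (a,i)" using ends[of "(b,i)" "(a,i)" x y] prem ab by (metis insert_commute)
        thus ?thesis using ab False by blast
      qed
    qed
    have match: "is_matching (Ms 0)" unfolding is_matching_def
    proof (intro ballI impI)
      fix e f assume ef: "e \<in> Ms 0" "f \<in> Ms 0" "e \<noteq> f"
      obtain a b i where ab: "e = {(a,i),(b,i)}" "i \<in> {1..k}" "a \<in> A" "b \<in> B" "{a,b} \<in> P i"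
        using ef(1) unfolding Ms0 by blast
      obtain a' b' j where ab': "f = {(a',j),(b',j)}" "j \<in> {1..k}" "a' \<in> A" "b' \<in> B" "{a',b'} \<in> P j"
        using ef(2) unfolding Ms0 by blast
      show "e \<inter> f = {}"
      proof (rule ccontr)
        assume "e \<inter> f \<noteq> {}"
        then obtain z where "z \<in> e" "z \<in> f" by auto
        hence ij: "i = j" and sh: "a = a' \<or> b = b'" using ab ab' assms(3) by auto
        have "is_matching (P i)" using assms(9) ab(2) unfolding monotone_matching_def by auto
        hence mP: "\<And>e f. e \<in> P i \<Longrightarrow> f \<in> P i \<Longrightarrow> e \<noteq> f \<Longrightarrow> e \<inter> f = {}"
          unfolding is_matching_def by blast
        have ne: "{a,b} \<inter> {a',b'} \<noteq> {}" using sh by auto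
        have "{a',b'} \<in> P i" using ab'(5) ij by simp
        hence "{a,b} = {a',b'}" using mP[OF ab(5)] ne by blast
        hence "a = a' \<and> b = b'" using ab ab' assms(3) by (auto simp: doubleton_eq_iff)
        thus False using ef(3) ab ab' ij by auto
      qed
    qed
    have nc: "\<not> crosses X Y ord ord e f" if ef: "e \<in> Ms 0" "f \<in> Ms 0" for e f
    proof
      assume "crosses X Y ord ord e f"
      then obtain x y x' y' where c: "x \<in> X" "y \<in> Y" "x' \<in> X" "y' \<in> Y" "e = {x,y}" "f = {x',y'}"
        "ord x < ord x'" "ord y' < ord y" unfolding crosses_def by blast
      obtain a b i where A1: "{a,b} \<in> P i" "i \<in> {1..k}" "a \<in> A" "b \<in> B"
         "(odd i \<and> x = (a,i) \<and> y = (b,i)) \<or> (even i \<and> x = (b,i) \<and> y = (a,i))"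
        using h0[OF ef(1) c(5) c(1,2)] by blast
      obtain a' b' j where A2: "{a',b'} \<in> P j" "j \<in> {1..k}" "a' \<in> A" "b' \<in> B"
         "(odd j \<and> x' = (a',j) \<and> y' = (b',j)) \<or> (even j \<and> x' = (b',j) \<and> y' = (a',j))"
        using h0[OF ef(2) c(6) c(3,4)] by blast
      obtain p q where pq: "p \<in> A \<union> B" "q \<in> A \<union> B" "x = (p,i)" "x' = (q,j)" using A1 A2 by blast
      obtain p' q' where pq': "p' \<in> A \<union> B" "q' \<in> A \<union> B" "y = (p',i)" "y' = (q',j)" using A1 A2 by blast
      have le1: "i \<le> j" using ordlt[OF pq(1,2), of i j] c(7) pq by auto
      have le2: "j \<le> i" using ordlt[OF pq'(2,1), of j i] c(8) pq' by auto
      hence ij: "i = j" using le1 by simp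
      have mm: "monotone_matching A B oA oB (P i)" using assms(9) A1(2) by auto
      show False
      proof (cases "odd i")
        case True
        hence "x = (a,i)" "y = (b,i)" "x' = (a',i)" "y' = (b',i)" using A1(5) A2(5) ij by auto
        hence "r a < r a'" "r b' < r b" using c(7,8) ordlt[of a a' i i] ordlt[of b' b i i] A1(3,4) A2(3,4) by auto
        hence "oA a < oA a'" "oB b' < oB b" using rA rB A1 A2 by auto
        hence "crosses A B oA oB {a,b} {a',b'}" unfolding crosses_def using A1 A2 by blast
        thus False using mm A1(1) A2(1) ij unfolding monotone_matching_def by blast
      next
        case False
        hence "x = (b,i)" "y = (a,i)" "x' = (b',i)" "y' = (a',i)" using A1(5) A2(5) ij by auto
        hence "r b < r b'" "r a' < r a" using c(7,8) ordlt[of b b' i i] ordlt[of a' a i i] A1(3,4) A2(3,4) by auto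
        hence "oA a' < oA a" "oB b < oB b'" using rA rB A1 A2 by auto
        hence "crosses A B oA oB {a',b'} {a,b}" unfolding crosses_def using A1 A2 by blast
        thus False using mm A1(1) A2(1) ij unfolding monotone_matching_def by blast
      qed
    qed
    show ?thesis unfolding monotone_matching_def using match nc by blast
  qed
  have m1: "monotone_matching X Y ord ord (Ms 1)"
  proof -
    have h1: "\<exists>v i. v \<in> A \<union> B \<and> x = (v,i) \<and> y = (v,Suc i)"
      if prem: "e \<in> Ms 1" "e = {x,y}" "x \<in> X" "y \<in> Y" for e x y
    proof -
      obtain v i where vi: "e = {(v,i),(v,Suc i)}" "v \<in> A \<union> B" "1 \<le> i" "i < k" "v \<in> A \<longleftrightarrow> odd i"
        using prem(1) unfolding Ms1 by blast
      hence "(v,i) \<in> X" "(v,Suc i) \<in> Y" unfolding X_def Y_def by auto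
      hence "x = (v,i) \<and> y = (v,Suc i)" using ends prem vi by metis
      thus ?thesis using vi by blast
    qed
    have match: "is_matching (Ms 1)" unfolding is_matching_def
    proof (intro ballI impI)
      fix e f assume ef: "e \<in> Ms 1" "f \<in> Ms 1" "e \<noteq> f"
      obtain v i where vi: "e = {(v,i),(v,Suc i)}" "v \<in> A \<union> B" "1 \<le> i" "i < k" "v \<in> A \<longleftrightarrow> odd i"
        using ef(1) unfolding Ms1 by blast
      obtain w j where wj: "f = {(w,j),(w,Suc j)}" "w \<in> A \<union> B" "1 \<le> j" "j < k" "w \<in> A \<longleftrightarrow> odd j"
        using ef(2) unfolding Ms1 by blast
      show "e \<inter> f = {}" using vi wj ef(3) by auto
    qed
    have nc: "\<not> crosses X Y ord ord e f" if ef: "e \<in> Ms 1" "f \<in> Ms 1" for e f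
    proof
      assume "crosses X Y ord ord e f"
      then obtain x y x' y' where c: "x \<in> X" "y \<in> Y" "x' \<in> X" "y' \<in> Y" "e = {x,y}" "f = {x',y'}"
        "ord x < ord x'" "ord y' < ord y" unfolding crosses_def by blast
      obtain v i where 1: "v \<in> A \<union> B" "x = (v,i)" "y = (v,Suc i)" using h1[OF ef(1) c(5) c(1,2)] by blast
      obtain w j where 2: "w \<in> A \<union> B" "x' = (w,j)" "y' = (w,Suc j)" using h1[OF ef(2) c(6) c(3,4)] by blast
      have "i < j \<or> (i = j \<and> r v < r w)" using ordlt[OF 1(1) 2(1)] c(7) 1 2 by auto
      moreover have "Suc j < Suc i \<or> (Suc j = Suc i \<and> r w < r v)" using ordlt[OF 2(1) 1(1)] c(8) 1 2 by auto
      ultimately show False by auto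
    qed
    show ?thesis unfolding monotone_matching_def using match nc by blast
  qed
  have m2: "monotone_matching X Y ord ord (Ms 2)"
  proof -
    have h1: "\<exists>v i. v \<in> A \<union> B \<and> x = (v,Suc i) \<and> y = (v,i)"
      if prem: "e \<in> Ms 2" "e = {x,y}" "x \<in> X" "y \<in> Y" for e x y
    proof -
      obtain v i where vi: "e = {(v,i),(v,Suc i)}" "v \<in> A \<union> B" "1 \<le> i" "i < k" "v \<in> A \<longleftrightarrow> even i"
        using prem(1) unfolding Ms2 by blast
      hence "(v,Suc i) \<in> X" "(v,i) \<in> Y" unfolding X_def Y_def by auto
      hence "x = (v,Suc i) \<and> y = (v,i)" using ends[of "(v,Suc i)" "(v,i)" x y] prem vi by (metis insert_commute)
      thus ?thesis using vi by blast
    qed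
    have match: "is_matching (Ms 2)" unfolding is_matching_def
    proof (intro ballI impI)
      fix e f assume ef: "e \<in> Ms 2" "f \<in> Ms 2" "e \<noteq> f"
      obtain v i where vi: "e = {(v,i),(v,Suc i)}" "v \<in> A \<union> B" "1 \<le> i" "i < k" "v \<in> A \<longleftrightarrow> even i"
        using ef(1) unfolding Ms2 by blast
      obtain w j where wj: "f = {(w,j),(w,Suc j)}" "w \<in> A \<union> B" "1 \<le> j" "j < k" "w \<in> A \<longleftrightarrow> even j"
        using ef(2) unfolding Ms2 by blast
      show "e \<inter> f = {}" using vi wj ef(3) by auto
    qed
    have nc: "\<not> crosses X Y ord ord e f" if ef: "e \<in> Ms 2" "f \<in> Ms 2" for e f
    proof
      assume "crosses X Y ord ord e f"
      then obtain x y x' y' where c: "x \<in> X" "y \<in> Y" "x' \<in> X" "y' \<in> Y" "e = {x,y}" "f = {x',y'}"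
        "ord x < ord x'" "ord y' < ord y" unfolding crosses_def by blast
      obtain v i where 1: "v \<in> A \<union> B" "x = (v,Suc i)" "y = (v,i)" using h1[OF ef(1) c(5) c(1,2)] by blast
      obtain w j where 2: "w \<in> A \<union> B" "x' = (w,Suc j)" "y' = (w,j)" using h1[OF ef(2) c(6) c(3,4)] by blast
      have "Suc i < Suc j \<or> (i = j \<and> r v < r w)" using ordlt[OF 1(1) 2(1)] c(7) 1 2 by auto
      moreover have "j < i \<or> (j = i \<and> r w < r v)" using ordlt[OF 2(1) 1(1)] c(8) 1 2 by auto
      ultimately show False by auto
    qed
    show ?thesis unfolding monotone_matching_def using match nc by blast
  qed
  have mono: "\<forall>n<3. monotone_matching X Y ord ord (Ms n)"
    using m0 m1 m2 by (metis One_nat_def less_Suc_eq numeral_3_eq_3 numeral_2_eq_2 less_one)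
  show ?thesis unfolding d_monotone_def
    apply (rule exI[of _ X], rule exI[of _ Y], rule exI[of _ ord], rule exI[of _ ord], rule exI[of _ Ms])
    using XY XYV injX injY edges Eeq mono by auto
qed

end
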